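(* Let $g>0$ be an integer and let $P_g(x,y,z,q)$ be the Laurent polynomial \[ P_g(x,y,z,q):=(-1)^gq^{-g}\Big(y^{-g}z^{g}\prod_{i=1}^{g}(yq^i-1)+y^{g}z^{-g}\prod_{i=1}^{g}(zq^i-1)\Big) +\sum_{\substack{0\le t',u'\le g-1\\ t'+u'\le g}}(-1)^{t'+u'}\binom{g}{t';u';g-t'-u'}_q\,y^{u'-t'}z^{t'-u'}q^{t'u'-t'-u'}(x-yq^{t'}-zq^{u'}+1)\prod_{i=1}^{g-t'-1}(zq^i-1)\prod_{i=1}^{g-u'-1}(yq^i-1), \] viewed as a Laurent polynomial in $x,y,z$ with coefficients in $\mathbb{Q}(q)$. Define the weight of a monomial $x^\alpha y^\beta z^\gamma$ to be $2\alpha+\beta+\gamma$. Then among the monomials appearing in $P_g$ with nonzero coefficient there is a unique one of maximal weight, namely $x\,y^{g-1}z^{g-1}$.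
   Context: $[m]!_q=\prod_{i=1}^m(1+q+\dots+q^{i-1})$ and $\binom{g}{a;b;g-a-b}_q=[g]!_q/([a]!_q[b]!_q[g-a-b]!_q)$. *)

theory Defs
  imports "HOL-Computational_Algebra.Polynomial" "HOL-Computational_Algebra.Fraction_Field"
          "HOL-Library.Poly_Mapping" "HOL-Library.Product_Plus"
begin

type_synonym qfield = "rat poly fract"

definition qvar :: qfield where "qvar = Fract [:0, 1:] 1"

text \<open>Laurent polynomials in x, y, z over Q(q): finitely supported maps from
  exponent triples (alpha, beta, gamma) in Z^3 to Q(q), multiplied by convolution.\<close>
type_synonym laurent3 = "(int \<times> int \<times> int) \<Rightarrow>\<^sub>0 qfield"

definition mon :: "int \<Rightarrow> int \<Rightarrow> int \<Rightarrow> laurent3"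
  where "mon a b c = Poly_Mapping.single (a, b, c) 1"

definition const :: "qfield \<Rightarrow> laurent3"
  where "const c = Poly_Mapping.single (0, 0, 0) c"

definition Xv :: laurent3 where "Xv = mon 1 0 0"
definition Yv :: laurent3 where "Yv = mon 0 1 0"
definition Zv :: laurent3 where "Zv = mon 0 0 1"

definition qint :: "nat \<Rightarrow> qfield" where "qint i = (\<Sum>j<i. qvar ^ j)"
definition qfact :: "nat \<Rightarrow> qfield" where "qfact m = (\<Prod>i=1..m. qint i)"
definition qmultinom :: "nat \<Rightarrow> nat \<Rightarrow> nat \<Rightarrow> qfield"
  where "qmultinom g a b = qfact g / (qfact a * qfact b * qfact (g - a - b))"

definition P :: "nat \<Rightarrow> laurent3" where
  "P g =
     const ((-1) ^ g * qvar powi (- int g)) *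
       (mon 0 (- int g) (int g) * (\<Prod>i=1..g. Yv * const (qvar ^ i) - 1)
        + mon 0 (int g) (- int g) * (\<Prod>i=1..g. Zv * const (qvar ^ i) - 1))
   + (\<Sum>(t, u) \<in> {(t, u). t \<le> g - 1 \<and> u \<le> g - 1 \<and> t + u \<le> g}.
        const ((-1) ^ (t + u) * qmultinom g t u
               * qvar powi (int t * int u - int t - int u))
        * mon 0 (int u - int t) (int t - int u)
        * (Xv - Yv * const (qvar ^ t) - Zv * const (qvar ^ u) + 1)
        * (\<Prod>i=1..g - t - 1. Zv * const (qvar ^ i) - 1)
        * (\<Prod>i=1..g - u - 1. Yv * const (qvar ^ i) - 1))"

definition weight :: "int \<times> int \<times> int \<Rightarrow> int"
  where "weight m = (case m of (a, b, c) \<Rightarrow> 2 * a + b + c)"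

end

theory Submission
  imports Defs
begin

definition wb :: "int \<Rightarrow> laurent3 \<Rightarrow> bool" where
  "wb n p = (\<forall>m\<in>Poly_Mapping.keys p. weight m \<le> n)"

lemma weight_add: "weight (a + b) = weight a + weight b"
  by (cases a; cases b) (auto simp: weight_def)

lemma weight_zero[simp]: "weight 0 = 0"
  by (simp add: weight_def zero_prod_def)

lemma wb_zero[simp]: "wb n 0" by (simp add: wb_def)

lemma wb_mono: "wb n p \<Longrightarrow> n \<le> k \<Longrightarrow> wb k p"
  by (auto simp: wb_def)

lemma wb_add: "wb n p \<Longrightarrow> wb n r \<Longrightarrow> wb n (p + r)"
  using keys_add[of p r] by (auto simp: wb_def)

lemma keys_uminus': "Poly_Mapping.keys (- p) = Poly_Mapping.keys (p::laurent3)"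
  by (auto simp: in_keys_iff)

lemma wb_uminus: "wb n p \<Longrightarrow> wb n (- p)"
  by (simp add: wb_def keys_uminus')

lemma wb_diff: "wb n p \<Longrightarrow> wb n r \<Longrightarrow> wb n (p - r)"
  using wb_add[of n p "-r"] wb_uminus[of n r] by simp

lemma wb_mult: "wb n p \<Longrightarrow> wb k r \<Longrightarrow> wb (n + k) (p * r)"
  unfolding wb_def
proof
  fix m assume A: "\<forall>m\<in>Poly_Mapping.keys p. weight m \<le> n" "\<forall>m\<in>Poly_Mapping.keys r. weight m \<le> k"
    and m: "m \<in> Poly_Mapping.keys (p * r)"
  then obtain a b where "m = a + b" "a \<in> Poly_Mapping.keys p" "b \<in> Poly_Mapping.keys r"
    using keys_mult[of p r] by blast
  then show "weight m \<le> n + k" using A by (simp add: weight_add add_mono)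
qed

lemma wb_single: "weight k \<le> n \<Longrightarrow> wb n (Poly_Mapping.single k c)"
  by (simp add: wb_def)

lemma wb_one[simp]: "wb 0 1"
  by (simp add: wb_def)

lemma wb_sum: "finite A \<Longrightarrow> (\<And>i. i \<in> A \<Longrightarrow> wb n (f i)) \<Longrightarrow> wb n (sum f A)"
  by (induction A rule: finite_induct) (auto intro: wb_add)

lemma wb_prod1: "finite A \<Longrightarrow> (\<And>i. i \<in> A \<Longrightarrow> wb 1 (f i)) \<Longrightarrow> wb (int (card A)) (prod f A)"
proof (induction A rule: finite_induct)
  case empty then show ?case by simp
next
  case (insert x F)
  have "wb (1 + int (card F)) (f x * prod f F)"
    using insert by (intro wb_mult) auto
  then show ?case using insert by (simp add: add.commute)
qed

definition lt :: "int \<Rightarrow> (int \<times> int \<times> int) \<Rightarrow> qfield \<Rightarrow> laurent3 \<Rightarrow> bool" where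
  "lt w k c p = (weight k = w \<and> wb (w - 1) (p - Poly_Mapping.single k c))"

lemma lt_wb: "lt w k c p \<Longrightarrow> wb w p"
proof -
  assume "lt w k c p"
  then have "wb w (p - Poly_Mapping.single k c)" "wb w (Poly_Mapping.single k c)"
    by (auto simp: lt_def intro: wb_mono wb_single)
  from wb_add[OF this] show ?thesis by simp
qed

lemma lt_single: "lt (weight k) k c (Poly_Mapping.single k c)"
  by (simp add: lt_def)

lemma lt_mult:
  assumes "lt w1 k1 c1 p" "lt w2 k2 c2 r"
  shows "lt (w1 + w2) (k1 + k2) (c1 * c2) (p * r)"
proof -
  let ?s1 = "Poly_Mapping.single k1 c1" and ?s2 = "Poly_Mapping.single k2 c2"
  have e: "p * r - Poly_Mapping.single (k1 + k2) (c1 * c2) = (p - ?s1) * r + ?s1 * (r - ?s2)"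
    by (simp add: mult_single[symmetric] algebra_simps)
  have a0: "wb (w1 - 1 + w2) ((p - ?s1) * r)"
    using assms lt_wb[OF assms(2)] by (intro wb_mult) (auto simp: lt_def)
  then have a: "wb (w1 + w2 - 1) ((p - ?s1) * r)" by (simp add: algebra_simps)
  have b0: "wb (w1 + (w2 - 1)) (?s1 * (r - ?s2))"
    using assms by (intro wb_mult wb_single) (auto simp: lt_def)
  then have b: "wb (w1 + w2 - 1) (?s1 * (r - ?s2))" by (simp add: algebra_simps)
  show ?thesis using assms a b unfolding lt_def e
    by (auto simp: weight_add intro!: wb_add)
qed

lemma lt_add: "lt w k c p \<Longrightarrow> wb (w - 1) r \<Longrightarrow> lt w k c (p + r)"
  unfolding lt_def using wb_add[of "w-1" "p - Poly_Mapping.single k c" r]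
  by (simp add: algebra_simps)

lemma lt_add2: "lt w k c p \<Longrightarrow> wb (w - 1) r \<Longrightarrow> lt w k c (r + p)"
  using lt_add by (simp add: add.commute)

lemma lt_diff: "lt w k c p \<Longrightarrow> wb (w - 1) r \<Longrightarrow> lt w k c (p - r)"
  using lt_add[of w k c p "-r"] wb_uminus by simp

lemma lt_cong: "lt w k c p \<Longrightarrow> w = w' \<Longrightarrow> k = k' \<Longrightarrow> c = c' \<Longrightarrow> lt w' k' c' p"
  by simp

lemma const_single: "const c = Poly_Mapping.single 0 c"
  by (simp add: const_def zero_prod_def)

lemma mon_const: "mon a b d * const c = Poly_Mapping.single (a, b, d) c"
  by (simp add: mon_def const_single mult_single)

lemma wb_factor: "wb 1 (Yv * const c - 1)" "wb 1 (Zv * const c - 1)"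
  unfolding Yv_def Zv_def mon_const
  by (auto intro!: wb_diff wb_single wb_mono[OF wb_one] simp: weight_def)

lemma lt_prodZ: "lt (int n) (0, 0, int n) (\<Prod>i=1..n. qvar ^ i) (\<Prod>i=1..n. Zv * const (qvar ^ i) - 1)"
proof (induction n)
  case 0
  then show ?case using lt_single[of "0::int\<times>int\<times>int" "1::qfield"] by (simp add: zero_prod_def[symmetric])
next
  case (Suc n)
  have f: "lt 1 (0,0,1) (qvar ^ Suc n) (Zv * const (qvar ^ Suc n) - 1)"
    unfolding Zv_def mon_const
    by (rule lt_diff[OF lt_cong[OF lt_single]]) (auto simp: weight_def)
  from lt_mult[OF Suc f] show ?case
    by (simp add: prod.cl_ivl_Suc add.commute)
qed

lemma lt_prodY: "lt (int n) (0, int n, 0) (\<Prod>i=1..n. qvar ^ i) (\<Prod>i=1..n. Yv * const (qvar ^ i) - 1)"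
proof (induction n)
  case 0
  then show ?case using lt_single[of "0::int\<times>int\<times>int" "1::qfield"] by (simp add: zero_prod_def[symmetric])
next
  case (Suc n)
  have f: "lt 1 (0,1,0) (qvar ^ Suc n) (Yv * const (qvar ^ Suc n) - 1)"
    unfolding Yv_def mon_const
    by (rule lt_diff[OF lt_cong[OF lt_single]]) (auto simp: weight_def)
  from lt_mult[OF Suc f] show ?case
    by (simp add: prod.cl_ivl_Suc add.commute)
qed

lemma qvar_pow: "qvar ^ j = Fract ([:0,1:] ^ j) 1"
  by (induction j) (auto simp: qvar_def One_fract_def)

lemma qint_Fract: "qint i = Fract (\<Sum>j<i. [:0,1:] ^ j) 1"
  by (induction i) (auto simp: qint_def qvar_pow Zero_fract_def)

lemma qint_nz: "i > 0 \<Longrightarrow> qint i \<noteq> 0"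
proof
  assume i: "i > 0" and "qint i = 0"
  then have "(\<Sum>j<i. [:0,1:] ^ j) = (0 :: rat poly)"
    by (simp add: qint_Fract Zero_fract_def eq_fract)
  then have "poly (\<Sum>j<i. [:0,1:] ^ j) 1 = (0::rat)" by simp
  moreover have "poly (\<Sum>j<i. [:0,1::rat:] ^ j) 1 = of_nat i"
    by (simp add: poly_sum)
  ultimately show False using i by simp
qed

lemma qfact_nz: "qfact m \<noteq> 0"
  by (simp add: qfact_def qint_nz)

lemma qvar_nz: "qvar \<noteq> 0"
  by (simp add: qvar_def Zero_fract_def eq_fract)


lemma lt_final:
  assumes "lt w k c p" "c \<noteq> 0"
  shows "k \<in> Poly_Mapping.keys p \<and> (\<forall>m \<in> Poly_Mapping.keys p. m \<noteq> k \<longrightarrow> weight m < weight k)"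
proof -
  let ?r = "p - Poly_Mapping.single k c"
  have wk: "weight k = w" and wr: "wb (w - 1) ?r" using assms by (auto simp: lt_def)
  have pe: "p = ?r + Poly_Mapping.single k c" by simp
  have "k \<notin> Poly_Mapping.keys ?r" using wr wk by (auto simp: wb_def)
  then have "Poly_Mapping.lookup ?r k = 0" by (simp add: in_keys_iff)
  then have "Poly_Mapping.lookup p k = c" by (simp add: lookup_minus)
  then have 1: "k \<in> Poly_Mapping.keys p" using assms by (simp add: in_keys_iff)
  have 2: "weight m < weight k" if "m \<in> Poly_Mapping.keys p" "m \<noteq> k" for m
  proof -
    have "Poly_Mapping.lookup p m = Poly_Mapping.lookup ?r m" using that by (simp add: lookup_minus lookup_single)
    then have "m \<in> Poly_Mapping.keys ?r" using that by (simp add: in_keys_iff)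
    then show ?thesis using wr wk by (auto simp: wb_def)
  qed
  show ?thesis using 1 2 by blast
qed

lemma wb_const: "wb 0 (const c)"
  by (simp add: const_single wb_single)

lemma wb_mon: "weight (a, b, d) \<le> n \<Longrightarrow> wb n (mon a b d)"
  by (simp add: mon_def wb_single)

lemma wb_lin: "wb 2 (Xv - Yv * const a - Zv * const b + 1)"
  unfolding Xv_def Yv_def Zv_def mon_const
  by (intro wb_add wb_diff wb_mon wb_single wb_mono[OF wb_one]) (auto simp: weight_def)

lemma lt_lin: "lt 2 (1, 0, 0) 1 (Xv - Yv * const a - Zv * const b + 1)"
proof -
  have "lt 2 (1,0,0) 1 (mon 1 0 0)" using lt_single[of "(1,0,0)" 1] by (simp add: mon_def weight_def)
  then show ?thesis unfolding Xv_def Yv_def Zv_def mon_const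
    by (intro lt_add lt_diff) (auto intro: wb_single wb_mono[OF wb_one] simp: weight_def)
qed

lemma wb_prod_ivl: "(\<And>i. wb 1 (f i)) \<Longrightarrow> wb (int n) (\<Prod>i=1..n. f i)"
  using wb_prod1[of "{1..n}" f] by simp

theorem proposition5p5:
  fixes g :: nat
  assumes "g > 0"
  shows "(1, int g - 1, int g - 1) \<in> Poly_Mapping.keys (P g)
         \<and> (\<forall>m \<in> Poly_Mapping.keys (P g). m \<noteq> (1, int g - 1, int g - 1)
                \<longrightarrow> weight m < weight (1, int g - 1, int g - 1))"
proof -
  define A where "A = const ((-1) ^ g * qvar powi (- int g)) *
       (mon 0 (- int g) (int g) * (\<Prod>i=1..g. Yv * const (qvar ^ i) - 1)
        + mon 0 (int g) (- int g) * (\<Prod>i=1..g. Zv * const (qvar ^ i) - 1))"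
  define S where "S = {(t, u). t \<le> g - 1 \<and> u \<le> g - 1 \<and> t + u \<le> g}"
  define F where "F = (\<lambda>(t, u).
        const ((-1) ^ (t + u) * qmultinom g t u
               * qvar powi (int t * int u - int t - int u))
        * mon 0 (int u - int t) (int t - int u)
        * (Xv - Yv * const (qvar ^ t) - Zv * const (qvar ^ u) + 1)
        * (\<Prod>i=1..g - t - 1. Zv * const (qvar ^ i) - 1)
        * (\<Prod>i=1..g - u - 1. Yv * const (qvar ^ i) - 1))"
  have Pe: "P g = A + sum F S" unfolding P_def A_def S_def F_def by (rule refl)
  have finS: "finite S"
    by (rule finite_subset[of _ "{..g} \<times> {..g}"]) (auto simp: S_def)
  have S0: "(0, 0) \<in> S" by (simp add: S_def)
  have wA0: "wb (0 + (0 + int g)) A"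
    unfolding A_def
    by (intro wb_mult wb_add wb_const wb_mon wb_prod_ivl wb_factor) (auto simp: weight_def)
  have wA: "wb (2 * int g - 1) A" using wA0 assms by (auto intro: wb_mono)
  have wF: "wb (2 * int g - 1) (F tu)" if "tu \<in> S - {(0,0)}" for tu
  proof -
    obtain t u where tu: "tu = (t, u)" by fastforce
    have h: "t \<le> g - 1" "u \<le> g - 1" "t + u \<ge> 1" using that tu by (auto simp: S_def)
    have "wb (0 + 0 + 2 + int (card {1..g - t - 1}) + int (card {1..g - u - 1})) (F tu)"
      unfolding tu F_def split
      by (intro wb_mult wb_const wb_mon wb_lin wb_prod1 wb_factor) (auto simp: weight_def)
    moreover have "0 + 0 + 2 + int (card {1..g - t - 1}) + int (card {1..g - u - 1}) \<le> 2 * int g - 1"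
      using h assms by simp
    ultimately show ?thesis by (rule wb_mono)
  qed
  define c0 where "c0 = (-1) ^ (0 + 0) * qmultinom g 0 0 * qvar powi (int 0 * int 0 - int 0 - int 0)"
  have F0: "F (0, 0) = const c0 * mon 0 (int 0 - int 0) (int 0 - int 0)
        * (Xv - Yv * const (qvar ^ 0) - Zv * const (qvar ^ 0) + 1)
        * (\<Prod>i=1..g - 0 - 1. Zv * const (qvar ^ i) - 1)
        * (\<Prod>i=1..g - 0 - 1. Yv * const (qvar ^ i) - 1)"
    by (simp add: F_def c0_def)
  have l1: "lt 0 (0,0,0) c0 (const c0)"
    using lt_single[of "(0,0,0)" c0] by (simp add: const_def weight_def)
  have l2: "lt 0 (0,0,0) 1 (mon 0 (int 0 - int 0) (int 0 - int 0))"
    using lt_single[of "(0,0,0)" 1] by (simp add: mon_def weight_def)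
  define Q where "Q = (\<Prod>i=1..g - 0 - 1. qvar ^ i)"
  have lF: "lt (0 + 0 + 2 + int (g - 0 - 1) + int (g - 0 - 1))
     ((0,0,0) + (0,0,0) + (1,0,0) + (0, 0, int (g - 0 - 1)) + (0, int (g - 0 - 1), 0))
     (c0 * 1 * 1 * Q * Q) (F (0, 0))"
    unfolding F0 Q_def
    by (intro lt_mult l1 l2 lt_lin lt_prodZ lt_prodY)
  have lF': "lt (2 * int g) (1, int g - 1, int g - 1) (c0 * Q * Q) (F (0, 0))"
    by (rule lt_cong[OF lF]) (use assms in auto)
  have "sum F S = F (0,0) + sum F (S - {(0,0)})"
    using finS S0 by (rule sum.remove)
  moreover have "wb (2 * int g - 1) (sum F (S - {(0,0)}))"
    using finS wF by (intro wb_sum) auto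
  ultimately have lS: "lt (2 * int g) (1, int g - 1, int g - 1) (c0 * Q * Q) (sum F S)"
    using lt_add[OF lF'] by simp
  have lP: "lt (2 * int g) (1, int g - 1, int g - 1) (c0 * Q * Q) (P g)"
    unfolding Pe by (rule lt_add2[OF lS wA])
  have "c0 = 1" using qfact_nz[of g] by (simp add: c0_def qmultinom_def qfact_def)
  moreover have "Q \<noteq> 0" using qvar_nz by (simp add: Q_def)
  ultimately have cnz: "c0 * Q * Q \<noteq> 0" by simp
  show ?thesis using lt_final[OF lP cnz] by simp
qed

end
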